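(* For every $n\ge1$ and $0\le m<n$, $S_{n,m}(0010,0021)=S_{n,m}(0011,0021)$.
   Context: An ascent in a sequence is an index $j$ with $x_j<x_{j+1}$; $\mathrm{asc}$ counts ascents. An ascent sequence of length $n$ is a sequence $x_1\cdots x_n$ of non-negative integers with $x_1=0$ and $x_i\le \mathrm{asc}(x_1\cdots x_{i-1})+1$ for $1<i\le n$. A sequence contains a pattern $\tau$ (a sequence of non-negative integers) if some subsequence is order-isomorphic to $\tau$ (same relative order, equal letters to equal letters); otherwise it avoids $\tau$. $S_{n,m}(T)$ is the number of ascent sequences of length $n$ with exactly $m$ ascents avoiding all patterns in $T$. *)

theory Defs
  imports Main
begin

definition asc :: "nat list \<Rightarrow> nat" where
  "asc xs = card {j. Suc j < length xs \<and> xs ! j < xs ! Suc j}"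

definition ascent_seq :: "nat list \<Rightarrow> bool" where
  "ascent_seq xs \<longleftrightarrow> xs \<noteq> [] \<and> xs ! 0 = 0 \<and>
     (\<forall>i. 0 < i \<and> i < length xs \<longrightarrow> xs ! i \<le> asc (take i xs) + 1)"

definition contains :: "nat list \<Rightarrow> nat list \<Rightarrow> bool" where
  "contains xs p \<longleftrightarrow> (\<exists>f :: nat \<Rightarrow> nat.
     strict_mono_on {..<length p} f \<and> (\<forall>a<length p. f a < length xs) \<and>
     (\<forall>a<length p. \<forall>b<length p.
        (xs ! f a < xs ! f b \<longleftrightarrow> p ! a < p ! b) \<and>
        (xs ! f a = xs ! f b \<longleftrightarrow> p ! a = p ! b)))"

definition avoids :: "nat list \<Rightarrow> nat list \<Rightarrow> bool" where
  "avoids xs p \<longleftrightarrow> \<not> contains xs p"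

definition S :: "nat \<Rightarrow> nat \<Rightarrow> nat list set \<Rightarrow> nat" where
  "S n m T = card {xs. ascent_seq xs \<and> length xs = n \<and> asc xs = m \<and>
                      (\<forall>p\<in>T. avoids xs p)}"

end

theory Submission
  imports Defs
begin


lemma all_less_four: "(\<forall>a<(4::nat). P a) \<longleftrightarrow> P 0 \<and> P 1 \<and> P 2 \<and> P 3"
  by (auto simp: less_Suc_eq numeral_eq_Suc)

lemma contains4:
  assumes "length p = 4"
  shows "contains xs p \<longleftrightarrow> (\<exists>i j k l. i<j \<and> j<k \<and> k<l \<and> l < length xs \<and>
     (\<forall>a<4. \<forall>b<4. (xs!([i,j,k,l]!a) < xs!([i,j,k,l]!b) \<longleftrightarrow> p!a < p!b) \<and>
        (xs!([i,j,k,l]!a) = xs!([i,j,k,l]!b) \<longleftrightarrow> p!a = p!b)))"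
proof
  assume "contains xs p"
  then obtain f where f: "strict_mono_on {..<length p} f" "\<forall>a<length p. f a < length xs"
    "\<forall>a<length p. \<forall>b<length p.
        (xs ! f a < xs ! f b \<longleftrightarrow> p ! a < p ! b) \<and>
        (xs ! f a = xs ! f b \<longleftrightarrow> p ! a = p ! b)"
    unfolding contains_def by blast
  have e: "\<And>a. a < 4 \<Longrightarrow> [f 0, f 1, f 2, f 3] ! a = f a"
    by (auto simp: less_Suc_eq numeral_eq_Suc)
  have "f 0 < f 1" "f 1 < f 2" "f 2 < f 3" using f(1) assms
    by (auto simp: strict_mono_on_def)
  moreover have "f 3 < length xs" using f(2) assms by auto
  ultimately show "\<exists>i j k l. i<j \<and> j<k \<and> k<l \<and> l < length xs \<and>
     (\<forall>a<4. \<forall>b<4. (xs!([i,j,k,l]!a) < xs!([i,j,k,l]!b) \<longleftrightarrow> p!a < p!b) \<and>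
        (xs!([i,j,k,l]!a) = xs!([i,j,k,l]!b) \<longleftrightarrow> p!a = p!b))"
    using f(3) assms e by (intro exI[of _ "f 0"] exI[of _ "f 1"] exI[of _ "f 2"] exI[of _ "f 3"]) simp
next
  assume "\<exists>i j k l. i<j \<and> j<k \<and> k<l \<and> l < length xs \<and>
     (\<forall>a<4. \<forall>b<4. (xs!([i,j,k,l]!a) < xs!([i,j,k,l]!b) \<longleftrightarrow> p!a < p!b) \<and>
        (xs!([i,j,k,l]!a) = xs!([i,j,k,l]!b) \<longleftrightarrow> p!a = p!b))"
  then obtain i j k l where h: "i<j" "j<k" "k<l" "l < length xs"
     "\<forall>a<4. \<forall>b<4. (xs!([i,j,k,l]!a) < xs!([i,j,k,l]!b) \<longleftrightarrow> p!a < p!b) \<and>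
        (xs!([i,j,k,l]!a) = xs!([i,j,k,l]!b) \<longleftrightarrow> p!a = p!b)" by blast
  show "contains xs p" unfolding contains_def
  proof (intro exI[of _ "\<lambda>a. [i,j,k,l]!a"] conjI)
    show "strict_mono_on {..<length p} (\<lambda>a. [i,j,k,l]!a)"
      using h(1-3) assms by (auto simp: strict_mono_on_def less_Suc_eq numeral_eq_Suc)
    show "\<forall>a<length p. [i,j,k,l]!a < length xs"
      using h(1-4) assms by (auto simp: less_Suc_eq numeral_eq_Suc)
  qed (use h(5) assms in auto)
qed

lemma contains_0010: "contains xs [0,0,1,0] \<longleftrightarrow> (\<exists>i j k l. i<j \<and> j<k \<and> k<l \<and> l < length xs \<and> xs!i = xs!j \<and> xs!i < xs!k \<and> xs!l = xs!i)"
proof -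
  have e: "\<And>i j k l. (\<forall>a<4. \<forall>b<4. (xs!([i,j,k,l]!a) < xs!([i,j,k,l]!b) \<longleftrightarrow> ([0,0,1,0]::nat list)!a < ([0,0,1,0]::nat list)!b) \<and>
        (xs!([i,j,k,l]!a) = xs!([i,j,k,l]!b) \<longleftrightarrow> ([0,0,1,0]::nat list)!a = ([0,0,1,0]::nat list)!b)) \<longleftrightarrow> (xs!i = xs!j \<and> xs!i < xs!k \<and> xs!l = xs!i)"
    apply (simp add: all_less_four) apply (intro iffI; elim conjE; intro conjI; linarith) done
  show ?thesis by (subst contains4) (simp, simp only: e)
qed
lemma contains_0021: "contains xs [0,0,2,1] \<longleftrightarrow> (\<exists>i j k l. i<j \<and> j<k \<and> k<l \<and> l < length xs \<and> xs!i = xs!j \<and> xs!i < xs!l \<and> xs!l < xs!k)"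
proof -
  have e: "\<And>i j k l. (\<forall>a<4. \<forall>b<4. (xs!([i,j,k,l]!a) < xs!([i,j,k,l]!b) \<longleftrightarrow> ([0,0,2,1]::nat list)!a < ([0,0,2,1]::nat list)!b) \<and>
        (xs!([i,j,k,l]!a) = xs!([i,j,k,l]!b) \<longleftrightarrow> ([0,0,2,1]::nat list)!a = ([0,0,2,1]::nat list)!b)) \<longleftrightarrow> (xs!i = xs!j \<and> xs!i < xs!l \<and> xs!l < xs!k)"
    apply (simp add: all_less_four) apply (intro iffI; elim conjE; intro conjI; linarith) done
  show ?thesis by (subst contains4) (simp, simp only: e)
qed
lemma contains_0011: "contains xs [0,0,1,1] \<longleftrightarrow> (\<exists>i j k l. i<j \<and> j<k \<and> k<l \<and> l < length xs \<and> xs!i = xs!j \<and> xs!i < xs!k \<and> xs!l = xs!k)"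
proof -
  have e: "\<And>i j k l. (\<forall>a<4. \<forall>b<4. (xs!([i,j,k,l]!a) < xs!([i,j,k,l]!b) \<longleftrightarrow> ([0,0,1,1]::nat list)!a < ([0,0,1,1]::nat list)!b) \<and>
        (xs!([i,j,k,l]!a) = xs!([i,j,k,l]!b) \<longleftrightarrow> ([0,0,1,1]::nat list)!a = ([0,0,1,1]::nat list)!b)) \<longleftrightarrow> (xs!i = xs!j \<and> xs!i < xs!k \<and> xs!l = xs!k)"
    apply (simp add: all_less_four) apply (intro iffI; elim conjE; intro conjI; linarith) done
  show ?thesis by (subst contains4) (simp, simp only: e)
qed


definition reps :: "nat list \<Rightarrow> nat \<Rightarrow> nat set" where
  "reps xs k = {xs!i | i. \<exists>j. i<j \<and> j<k \<and> j<length xs \<and> xs!i = xs!j}"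

definition mn :: "nat list \<Rightarrow> nat \<Rightarrow> nat" where
  "mn xs k = Min (reps xs k)"

definition PA :: "nat list \<Rightarrow> bool" where
  "PA xs \<longleftrightarrow> (\<forall>k l v. k < l \<and> l < length xs \<and> v \<in> reps xs k \<longrightarrow> \<not>(v \<le> xs!l \<and> xs!l < xs!k))"

definition PB :: "nat list \<Rightarrow> bool" where
  "PB xs \<longleftrightarrow> (\<forall>k l v. k < l \<and> l < length xs \<and> v \<in> reps xs k \<longrightarrow> \<not>(v < xs!l \<and> xs!l \<le> xs!k))"

definition Dc :: "nat list \<Rightarrow> nat \<Rightarrow> nat \<Rightarrow> bool" where
  "Dc xs l k \<longleftrightarrow> k < l \<and> reps xs k \<noteq> {} \<and> mn xs k < xs!l \<and> xs!k = xs!l"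

definition Kx :: "nat list \<Rightarrow> nat \<Rightarrow> nat" where
  "Kx xs l = (GREATEST k. Dc xs l k)"

definition phiv :: "nat list \<Rightarrow> nat \<Rightarrow> nat" where
  "phiv xs l = (if \<exists>k. Dc xs l k then mn xs (Kx xs l) else xs!l)"

definition phi :: "nat list \<Rightarrow> nat list" where
  "phi xs = map (phiv xs) [0..<length xs]"

lemma reps_finite: "finite (reps xs k)"
proof -
  have "reps xs k \<subseteq> (\<lambda>i. xs!i) ` {..<k}" unfolding reps_def by auto
  thus ?thesis using finite_subset by blast
qed

lemma reps_mono: "k \<le> k' \<Longrightarrow> reps xs k \<subseteq> reps xs k'"
  unfolding reps_def by fastforce

lemma mn_le: "v \<in> reps xs k \<Longrightarrow> mn xs k \<le> v"
  unfolding mn_def using reps_finite by auto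

lemma mn_in: "reps xs k \<noteq> {} \<Longrightarrow> mn xs k \<in> reps xs k"
  unfolding mn_def using reps_finite by auto

lemma mn_mono: "reps xs k \<noteq> {} \<Longrightarrow> k \<le> k' \<Longrightarrow> reps xs k' \<noteq> {} \<and> mn xs k' \<le> mn xs k"
  using reps_mono mn_in mn_le by blast

lemma Dc_K: "Dc xs l k \<Longrightarrow> Dc xs l (Kx xs l) \<and> k \<le> Kx xs l"
proof -
  assume d: "Dc xs l k"
  have b: "\<forall>y. Dc xs l y \<longrightarrow> y \<le> l" unfolding Dc_def by auto
  show ?thesis unfolding Kx_def using GreatestI_nat[of "Dc xs l" k l] Greatest_le_nat[of "Dc xs l" k l] d b by auto
qed

lemma PA_mn: "PA xs \<Longrightarrow> k < l \<Longrightarrow> l < length xs \<Longrightarrow> reps xs k \<noteq> {} \<Longrightarrow> \<not>(mn xs k \<le> xs!l \<and> xs!l < xs!k)"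
  unfolding PA_def using mn_in by blast

lemma PB_intro:
  assumes "\<And>k l. k < l \<Longrightarrow> l < length xs \<Longrightarrow> reps xs k \<noteq> {} \<Longrightarrow> \<not>(mn xs k < xs!l \<and> xs!l \<le> xs!k)"
  shows "PB xs"
  unfolding PB_def
proof (intro allI impI)
  fix k l v assume h: "k < l \<and> l < length xs \<and> v \<in> reps xs k"
  hence "mn xs k \<le> v" using mn_le by blast
  thus "\<not>(v < xs!l \<and> xs!l \<le> xs!k)" using assms[of k l] h by fastforce
qed

lemma phiv_nD: "\<not>(\<exists>k. Dc xs l k) \<Longrightarrow> phiv xs l = xs!l"
  unfolding phiv_def by auto

lemma phiv_D: "Dc xs l k \<Longrightarrow> phiv xs l = mn xs (Kx xs l)"
  unfolding phiv_def by auto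

lemma phiv_le: "phiv xs l \<le> xs!l"
proof (cases "\<exists>k. Dc xs l k")
  case True
  then obtain k where "Dc xs l k" by blast
  hence "Dc xs l (Kx xs l)" using Dc_K by blast
  thus ?thesis using phiv_D[OF \<open>Dc xs l k\<close>] unfolding Dc_def by simp
qed (simp add: phiv_nD)

lemma length_phi[simp]: "length (phi xs) = length xs"
  unfolding phi_def by simp

lemma nth_phi[simp]: "l < length xs \<Longrightarrow> phi xs ! l = phiv xs l"
  unfolding phi_def by simp


lemma phiv_cases:
  assumes "Dc xs p k"
  shows "Dc xs p (Kx xs p) \<and> phiv xs p = mn xs (Kx xs p)"
  using Dc_K[OF assms] phiv_D[OF assms] by blast

lemma phi_reps_low:
  assumes "p < k" "p < length xs" "phiv xs p \<noteq> xs!p"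
  shows "reps xs k \<noteq> {} \<and> mn xs k \<le> phiv xs p"
proof -
  have "\<exists>k'. Dc xs p k'" using assms(3) phiv_nD by metis
  then obtain k' where d: "Dc xs p k'" by blast
  let ?K = "Kx xs p"
  have D: "Dc xs p ?K" and v: "phiv xs p = mn xs ?K" using phiv_cases[OF d] by auto
  have "?K < p" "reps xs ?K \<noteq> {}" using D unfolding Dc_def by auto
  thus ?thesis using mn_mono[of xs ?K k] assms(1) v by auto
qed

lemma reps_phi:
  "(reps (phi xs) k \<noteq> {} \<longleftrightarrow> reps xs k \<noteq> {}) \<and> (reps xs k \<noteq> {} \<longrightarrow> mn (phi xs) k = mn xs k)"
proof -
  let ?y = "phi xs"
  have a: "mn xs k \<in> reps ?y k" if ne: "reps xs k \<noteq> {}"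
  proof -
    have "mn xs k \<in> reps xs k" using mn_in ne by blast
    then obtain i j where ij: "i<j" "j<k" "j<length xs" "xs!i = xs!j" "mn xs k = xs!i"
      unfolding reps_def by blast
    have keep: "phiv xs p = xs!p" if "p < k" "p < length xs" "xs!p = mn xs k" for p
    proof (rule ccontr)
      assume "phiv xs p \<noteq> xs!p"
      hence "mn xs k \<le> phiv xs p" using phi_reps_low that by blast
      thus False using phiv_le[of xs p] \<open>phiv xs p \<noteq> xs!p\<close> that(3) by linarith
    qed
    have "?y!i = xs!i" using keep[of i] ij by simp
    moreover have "?y!j = xs!j" using keep[of j] ij by simp
    ultimately have e: "?y!i = mn xs k" "?y!j = mn xs k" using ij by auto
    show ?thesis unfolding reps_def mem_Collect_eq
      by (rule exI[of _ i]) (use e ij in auto)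
  qed
  have b: "reps xs k \<noteq> {} \<and> mn xs k \<le> v" if v: "v \<in> reps ?y k" for v
  proof -
    obtain i j where ij: "i<j" "j<k" "j<length xs" "?y!i = ?y!j" "v = ?y!i"
      using v unfolding reps_def by auto
    show ?thesis
    proof (cases "phiv xs i = xs!i \<and> phiv xs j = xs!j")
      case True
      have "xs!i \<in> reps xs k" unfolding reps_def mem_Collect_eq
        by (rule exI[of _ i]) (use ij True in auto)
      moreover have "v = xs!i" using ij True by simp
      ultimately show ?thesis using mn_le by blast
    next
      case False
      hence "phiv xs i \<noteq> xs!i \<or> phiv xs j \<noteq> xs!j" by blast
      thus ?thesis
      proof
        assume "phiv xs i \<noteq> xs!i"
        thus ?thesis using phi_reps_low[of i k xs] ij by auto
      next
        assume "phiv xs j \<noteq> xs!j"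
        thus ?thesis using phi_reps_low[of j k xs] ij by auto
      qed
    qed
  qed
  show ?thesis
  proof (intro conjI impI)
    show "(reps ?y k \<noteq> {}) = (reps xs k \<noteq> {})" using a b by blast
    assume ne: "reps xs k \<noteq> {}"
    have "mn ?y k \<le> mn xs k" using a[OF ne] mn_le by blast
    moreover have "reps ?y k \<noteq> {}" using a[OF ne] by blast
    hence "mn xs k \<le> mn ?y k" using b mn_in by blast
    ultimately show "mn ?y k = mn xs k" by simp
  qed
qed


lemma Dc_E: "Dc xs l k \<Longrightarrow> Dc xs l (Kx xs l) \<and> Kx xs l < l \<and> reps xs (Kx xs l) \<noteq> {} \<and>
   mn xs (Kx xs l) < xs!l \<and> xs!(Kx xs l) = xs!l \<and> phiv xs l = mn xs (Kx xs l) \<and> k \<le> Kx xs l"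
  using Dc_K[of xs l k] phiv_D[of xs l k] unfolding Dc_def by blast

lemma asc_pres:
  assumes A: "PA x" and l: "Suc l < length x"
  shows "(x!l < x!Suc l) \<longleftrightarrow> (phiv x l < phiv x (Suc l))"
proof (cases "\<exists>k. Dc x l k")
  case False
  note F = False
  show ?thesis
  proof (cases "\<exists>k. Dc x (Suc l) k")
    case False
    thus ?thesis using F phiv_nD by simp
  next
    case True
    then obtain k where "Dc x (Suc l) k" by blast
    note K = Dc_E[OF this]
    define K where "K = Kx x (Suc l)"
    have K1: "K < Suc l" "reps x K \<noteq> {}" "mn x K < x!Suc l" "x!K = x!Suc l"
      "phiv x (Suc l) = mn x K" using K unfolding K_def by auto
    have "x!l < x!Suc l \<longleftrightarrow> x!l < mn x K"
    proof
      assume h: "x!l < x!Suc l"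
      hence "K \<noteq> l" using K1 by auto
      hence "K < l" using K1 by simp
      thus "x!l < mn x K" using PA_mn[OF A \<open>K < l\<close> _ K1(2)] l h K1 by auto
    qed (use K1 in auto)
    thus ?thesis using F phiv_nD K1 by simp
  qed
next
  case True
  note T = True
  then obtain k where "Dc x l k" by blast
  note K = Dc_E[OF this]
  define K where "K = Kx x l"
  have K1: "K < l" "reps x K \<noteq> {}" "mn x K < x!l" "x!K = x!l"
      "phiv x l = mn x K" using K unfolding K_def by auto
  show ?thesis
  proof (cases "\<exists>k. Dc x (Suc l) k")
    case False
    have "x!l < x!Suc l \<longleftrightarrow> mn x K < x!Suc l"
    proof
      assume h: "mn x K < x!Suc l"
      have "\<not>(mn x K \<le> x!Suc l \<and> x!Suc l < x!K)" using PA_mn[OF A _ l K1(2)] K1 by auto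
      hence ge: "x!l \<le> x!Suc l" using h K1 by auto
      have "x!l \<noteq> x!Suc l"
      proof
        assume "x!l = x!Suc l"
        hence "Dc x (Suc l) K" unfolding Dc_def using K1 h by auto
        thus False using False by blast
      qed
      thus "x!l < x!Suc l" using ge by simp
    qed (use K1 in auto)
    thus ?thesis using False phiv_nD K1 by simp
  next
    case True
    then obtain k' where "Dc x (Suc l) k'" by blast
    note K' = Dc_E[OF this]
    define K' where "K' = Kx x (Suc l)"
    have K2: "K' < Suc l" "reps x K' \<noteq> {}" "mn x K' < x!Suc l" "x!K' = x!Suc l"
      "phiv x (Suc l) = mn x K'" using K' unfolding K'_def by auto
    show ?thesis
    proof (cases "K' = l")
      case True
      have "mn x l \<le> mn x K" using mn_mono[OF K1(2)] K1 by simp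
      thus ?thesis using True K1 K2 by auto
    next
      case False
      hence K'l: "K' < l" using K2 by simp
      have "x!l < x!Suc l \<longleftrightarrow> mn x K < mn x K'"
      proof
        assume h: "x!l < x!Suc l"
        have "\<not>(mn x K' \<le> x!l \<and> x!l < x!K')" using PA_mn[OF A K'l _ K2(2)] l by auto
        thus "mn x K < mn x K'" using h K1 K2 by auto
      next
        assume h: "mn x K < mn x K'"
        show "x!l < x!Suc l"
        proof (rule ccontr)
          assume n: "\<not> x!l < x!Suc l"
          show False
          proof (cases "x!Suc l = x!l")
            case True
            have "reps x l \<noteq> {} \<and> mn x l \<le> mn x K" using mn_mono[OF K1(2)] K1 by simp
            hence "Dc x (Suc l) l" unfolding Dc_def using True K1 by auto
            hence "l \<le> K'" using Dc_E unfolding K'_def by blast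
            thus False using K'l by simp
          next
            case False
            have "\<not>(mn x K \<le> x!Suc l \<and> x!Suc l < x!K)" using PA_mn[OF A _ l K1(2)] K1 by auto
            thus False using False n h K1 K2 by auto
          qed
        qed
      qed
      thus ?thesis using K1 K2 by simp
    qed
  qed
qed


lemma PB_phi:
  assumes A: "PA x"
  shows "PB (phi x)"
proof (rule PB_intro)
  fix k l assume kl: "k < l" and l: "l < length (phi x)" and ne0: "reps (phi x) k \<noteq> {}"
  have ne: "reps x k \<noteq> {}" and M: "mn (phi x) k = mn x k" using reps_phi[of x k] ne0 by auto
  have ll: "l < length x" using l by simp
  have kk: "k < length x" using kl ll by simp
  show "\<not>(mn (phi x) k < phi x ! l \<and> phi x ! l \<le> phi x ! k)"
  proof
    assume h0: "mn (phi x) k < phi x ! l \<and> phi x ! l \<le> phi x ! k"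
    hence h: "mn x k < phiv x l" "phiv x l \<le> phiv x k" using M ll kk by auto
    have PAkl: "\<not>(mn x k \<le> x!l \<and> x!l < x!k)" using PA_mn[OF A kl ll ne] .
    show False
    proof (cases "\<exists>j. Dc x k j")
      case False
      note Fk = False
      show False
      proof (cases "\<exists>j. Dc x l j")
        case False
        have "mn x k < x!l" "x!l \<le> x!k" using h Fk False phiv_nD by auto
        hence "x!l = x!k" using PAkl by auto
        hence "Dc x l k" unfolding Dc_def using kl ne \<open>mn x k < x!l\<close> by auto
        thus False using False by blast
      next
        case True
        then obtain j where "Dc x l j" by blast
        note KE = Dc_E[OF this]
        define K where "K = Kx x l"
        have K1: "K < l" "reps x K \<noteq> {}" "mn x K < x!l" "x!K = x!l"
          "phiv x l = mn x K" using KE unfolding K_def by auto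
        have h1: "mn x k < mn x K" "mn x K \<le> x!k" using h K1 Fk phiv_nD by auto
        have Kk: "K < k"
        proof (rule ccontr)
          assume "\<not> K < k" hence "k \<le> K" by simp
          thus False using mn_mono[OF ne] h1 by fastforce
        qed
        have "\<not>(mn x K \<le> x!k \<and> x!k < x!K)" using PA_mn[OF A Kk kk K1(2)] .
        hence "x!K \<le> x!k" using h1 by auto
        moreover have "x!k \<le> x!l" using PAkl h1 K1 by auto
        ultimately have "x!k = x!l" using K1 by auto
        hence "Dc x l k" unfolding Dc_def using kl ne h1 K1 by auto
        hence "k \<le> K" using Dc_E unfolding K_def by blast
        thus False using Kk by simp
      qed
    next
      case True
      then obtain j where "Dc x k j" by blast
      note KE = Dc_E[OF this]
      define K where "K = Kx x k"
      have K1: "K < k" "reps x K \<noteq> {}" "mn x K < x!k" "x!K = x!k"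
          "phiv x k = mn x K" using KE unfolding K_def by auto
      show False
      proof (cases "\<exists>j. Dc x l j")
        case False
        have "mn x k < x!l" "x!l \<le> mn x K" using h K1 False phiv_nD by auto
        thus False using PAkl K1 by auto
      next
        case True
        then obtain j' where "Dc x l j'" by blast
        note KE' = Dc_E[OF this]
        define K' where "K' = Kx x l"
        have K2: "K' < l" "reps x K' \<noteq> {}" "mn x K' < x!l" "x!K' = x!l"
          "phiv x l = mn x K'" using KE' unfolding K'_def by auto
        have h2: "mn x k < mn x K'" "mn x K' \<le> mn x K" using h K1 K2 by auto
        have Kk: "K' < k"
        proof (rule ccontr)
          assume "\<not> K' < k" hence "k \<le> K'" by simp
          thus False using mn_mono[OF ne] h2 by fastforce
        qed
        have "x!k \<le> x!l" using PAkl h2 K2 by auto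
        moreover have "x!k \<noteq> x!l"
        proof
          assume "x!k = x!l"
          hence "Dc x l k" unfolding Dc_def using kl ne h2 K2 by auto
          hence "k \<le> K'" using Dc_E unfolding K'_def by blast
          thus False using Kk by simp
        qed
        ultimately have "x!k < x!l" by simp
        moreover have "\<not>(mn x K' \<le> x!k \<and> x!k < x!K')" using PA_mn[OF A Kk kk K2(2)] .
        ultimately show False using h2 K1 K2 by auto
      qed
    qed
  qed
qed


lemma lemG:
  assumes A: "PA x" and l: "l < length x" and D: "Dc x l j"
    and K2: "K2 < l" "reps x K2 \<noteq> {}" "mn x K2 = mn x (Kx x l)" "mn x K2 < x!K2" "Kx x l < K2"
  shows False
proof -
  note KE = Dc_E[OF D]
  define K where "K = Kx x l"
  have K1: "K < l" "reps x K \<noteq> {}" "mn x K < x!l" "x!K = x!l" using KE unfolding K_def by auto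
  have KK: "K < K2" "mn x K2 = mn x K" using K2 unfolding K_def by auto
  have k2l: "K2 < length x" using K2 l by simp
  have "\<not>(mn x K \<le> x!K2 \<and> x!K2 < x!K)" using PA_mn[OF A KK(1) k2l K1(2)] .
  hence ge: "x!K \<le> x!K2" using KK K2 by auto
  have "x!K2 \<noteq> x!l"
  proof
    assume "x!K2 = x!l"
    hence "Dc x l K2" unfolding Dc_def using K2 by auto
    hence "K2 \<le> K" using Dc_E unfolding K_def by blast
    thus False using KK by simp
  qed
  hence "x!l < x!K2" using ge K1 by simp
  moreover have "\<not>(mn x K2 \<le> x!l \<and> x!l < x!K2)" using PA_mn[OF A K2(1) l K2(2)] .
  ultimately show False using KK K1 by auto
qed

lemma reps_eq:
  assumes "length x = length x'" "\<forall>i<k. x!i = x'!i"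
  shows "reps x k = reps x' k"
proof -
  have e: "\<And>i j. i<j \<Longrightarrow> j<k \<Longrightarrow> x!i = x'!i \<and> x!j = x'!j" using assms(2) by auto
  show ?thesis unfolding reps_def
  proof (intro set_eqI iffI)
    fix v assume "v \<in> {x!i | i. \<exists>j. i<j \<and> j<k \<and> j<length x \<and> x!i = x!j}"
    then obtain i j where h: "v = x!i" "i<j" "j<k" "j<length x" "x!i = x!j" by blast
    have "v = x'!i" "j < length x'" "x'!i = x'!j" using h e[of i j] assms(1) by auto
    thus "v \<in> {x'!i | i. \<exists>j. i<j \<and> j<k \<and> j<length x' \<and> x'!i = x'!j}" using h by blast
  next
    fix v assume "v \<in> {x'!i | i. \<exists>j. i<j \<and> j<k \<and> j<length x' \<and> x'!i = x'!j}"
    then obtain i j where h: "v = x'!i" "i<j" "j<k" "j<length x'" "x'!i = x'!j" by blast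
    have "v = x!i" "j < length x" "x!i = x!j" using h e[of i j] assms(1) by auto
    thus "v \<in> {x!i | i. \<exists>j. i<j \<and> j<k \<and> j<length x \<and> x!i = x!j}" using h by blast
  qed
qed

lemma phi_inj:
  assumes A: "PA x" and A': "PA x'" and len: "length x = length x'" and eq: "phi x = phi x'"
  shows "x = x'"
proof (rule nth_equalityI[OF len])
  fix l0 assume "l0 < length x"
  thus "x!l0 = x'!l0"
  proof (induction l0 rule: less_induct)
    case (less l)
    have pre: "\<forall>i<l. x!i = x'!i" using less by simp
    have R: "\<And>k. k \<le> l \<Longrightarrow> reps x k = reps x' k"
    proof -
      fix k assume "k \<le> l"
      hence "\<forall>i<k. x!i = x'!i" using pre by simp
      thus "reps x k = reps x' k" using reps_eq[OF len] by blast
    qed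
    have Mn: "\<And>k. k \<le> l \<Longrightarrow> mn x k = mn x' k" unfolding mn_def using R by simp
    have l': "l < length x'" using less len by simp
    have pv: "phiv x l = phiv x' l" using arg_cong[OF eq, of "\<lambda>y. y!l"] less l' by simp
    show ?case
    proof (cases "\<exists>j. Dc x l j")
      case True
      then obtain j where "Dc x l j" by blast
      note KE = Dc_E[OF this]
      define K where "K = Kx x l"
      have K1: "K < l" "reps x K \<noteq> {}" "mn x K < x!l" "x!K = x!l" "phiv x l = mn x K"
        using KE unfolding K_def by auto
      show ?thesis
      proof (cases "\<exists>j. Dc x' l j")
        case False
        have v: "x'!l = mn x' K" using pv K1 phiv_nD[OF False] Mn[of K] by simp
        have "\<not>(mn x' K \<le> x'!l \<and> x'!l < x'!K)" using PA_mn[OF A' K1(1) l'] R[of K] K1 by auto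
        thus ?thesis using v K1 pre Mn[of K] by auto
      next
        case True
        then obtain j' where "Dc x' l j'" by blast
        note KE' = Dc_E[OF this]
        define K' where "K' = Kx x' l"
        have K2: "K' < l" "reps x' K' \<noteq> {}" "mn x' K' < x'!l" "x'!K' = x'!l" "phiv x' l = mn x' K'"
          using KE' unfolding K'_def by auto
        have mm: "mn x K = mn x' K'" using pv K1 K2 by simp
        consider "K = K'" | "K < K'" | "K' < K" by linarith
        thus ?thesis
        proof cases
          case 1 thus ?thesis using K1 K2 pre by auto
        next
          case 2
          show ?thesis
          proof (rule lemG[OF A less.prems \<open>Dc x l j\<close>, of K', THEN FalseE])
            show "K' < l" by (rule K2(1))
            show "reps x K' \<noteq> {}" using K2 R[of K'] by simp
            show "mn x K' = mn x (Kx x l)" using mm Mn[of K'] K2 unfolding K_def by simp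
            show "mn x K' < x!K'" using K2 Mn[of K'] pre by simp
            show "Kx x l < K'" using 2 unfolding K_def .
          qed
        next
          case 3
          show ?thesis
          proof (rule lemG[OF A' l' \<open>Dc x' l j'\<close>, of K, THEN FalseE])
            show "K < l" by (rule K1(1))
            show "reps x' K \<noteq> {}" using K1 R[of K] by simp
            show "mn x' K = mn x' (Kx x' l)" using mm Mn[of K] K1 unfolding K'_def by simp
            show "mn x' K < x'!K" using K1 Mn[of K] pre by simp
            show "Kx x' l < K" using 3 unfolding K'_def .
          qed
        qed
      qed
    next
      case False
      note F = False
      show ?thesis
      proof (cases "\<exists>j. Dc x' l j")
        case False
        thus ?thesis using pv F phiv_nD by simp
      next
        case True
        then obtain j' where "Dc x' l j'" by blast
        note KE' = Dc_E[OF this]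
        define K' where "K' = Kx x' l"
        have K2: "K' < l" "reps x' K' \<noteq> {}" "mn x' K' < x'!l" "x'!K' = x'!l" "phiv x' l = mn x' K'"
          using KE' unfolding K'_def by auto
        have v: "x!l = mn x K'" using pv K2 phiv_nD[OF F] Mn[of K'] by simp
        have "\<not>(mn x K' \<le> x!l \<and> x!l < x!K')" using PA_mn[OF A K2(1) less.prems] R[of K'] K2 by auto
        thus ?thesis using v K2 pre Mn[of K'] by auto
      qed
    qed
  qed
qed


lemma reps_snoc: "k \<le> length x \<Longrightarrow> reps (x@[b]) k = reps x k"
proof -
  assume kl: "k \<le> length x"
  have e: "\<And>i j. i<j \<Longrightarrow> j<k \<Longrightarrow> (x@[b])!i = x!i \<and> (x@[b])!j = x!j" using kl by (simp add: nth_append)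
  show ?thesis unfolding reps_def
  proof (intro set_eqI iffI)
    fix v assume "v \<in> {(x@[b])!i | i. \<exists>j. i<j \<and> j<k \<and> j<length (x@[b]) \<and> (x@[b])!i = (x@[b])!j}"
    then obtain i j where h: "v = (x@[b])!i" "i<j" "j<k" "(x@[b])!i = (x@[b])!j" by blast
    have "v = x!i" "j < length x" "x!i = x!j" using h e[of i j] kl by auto
    thus "v \<in> {x!i | i. \<exists>j. i<j \<and> j<k \<and> j<length x \<and> x!i = x!j}" using h by blast
  next
    fix v assume "v \<in> {x!i | i. \<exists>j. i<j \<and> j<k \<and> j<length x \<and> x!i = x!j}"
    then obtain i j where h: "v = x!i" "i<j" "j<k" "j<length x" "x!i = x!j" by blast
    have "v = (x@[b])!i" "j < length (x@[b])" "(x@[b])!i = (x@[b])!j" using h e[of i j] by auto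
    thus "v \<in> {(x@[b])!i | i. \<exists>j. i<j \<and> j<k \<and> j<length (x@[b]) \<and> (x@[b])!i = (x@[b])!j}" using h by blast
  qed
qed

lemma mn_snoc: "k \<le> length x \<Longrightarrow> mn (x@[b]) k = mn x k"
  unfolding mn_def using reps_snoc by simp

lemma Dc_snoc: "l < length x \<Longrightarrow> Dc (x@[b]) l k \<longleftrightarrow> Dc x l k"
  unfolding Dc_def using reps_snoc[of k x b] mn_snoc[of k x b] by (auto simp: nth_append)

lemma phiv_snoc: "l < length x \<Longrightarrow> phiv (x@[b]) l = phiv x l"
proof -
  assume l: "l < length x"
  have D: "Dc (x@[b]) l = Dc x l" using Dc_snoc[OF l] by (intro ext) simp
  hence K: "Kx (x@[b]) l = Kx x l" unfolding Kx_def by simp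
  show ?thesis
  proof (cases "\<exists>k. Dc x l k")
    case True
    then obtain k where k: "Dc x l k" by blast
    have "Kx x l \<le> length x" using Dc_E[OF k] l by simp
    thus ?thesis unfolding phiv_def using D K True mn_snoc by simp
  next
    case False
    moreover have "\<not>(\<exists>k. Dc (x@[b]) l k)" using D False by simp
    ultimately show ?thesis using phiv_nD l by (simp add: nth_append)
  qed
qed

lemma phi_snoc: "phi (x@[b]) = phi x @ [phiv (x@[b]) (length x)]"
  by (rule nth_equalityI) (auto simp: nth_append phiv_snoc less_Suc_eq)

lemma PA_snoc:
  assumes "PA x" "\<forall>k<length x. reps x k \<noteq> {} \<longrightarrow> \<not>(mn x k \<le> b \<and> b < x!k)"
  shows "PA (x@[b])"
  unfolding PA_def
proof (intro allI impI)
  fix k l v assume h: "k < l \<and> l < length (x@[b]) \<and> v \<in> reps (x@[b]) k"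
  hence kx: "k < length x" by simp
  have v: "v \<in> reps x k" using h reps_snoc[of k x b] by simp
  show "\<not>(v \<le> (x@[b])!l \<and> (x@[b])!l < (x@[b])!k)"
  proof (cases "l < length x")
    case True
    thus ?thesis using assms(1) h v unfolding PA_def by (auto simp: nth_append)
  next
    case False
    hence "l = length x" using h by simp
    moreover have "mn x k \<le> v" using mn_le v by blast
    moreover have "reps x k \<noteq> {}" using v by blast
    ultimately show ?thesis using assms(2) kx by (auto simp: nth_append)
  qed
qed

lemma PB_snoc:
  assumes "PB (y@[a])"
  shows "PB y" "\<forall>k<length y. reps y k \<noteq> {} \<longrightarrow> \<not>(mn y k < a \<and> a \<le> y!k)"
proof -
  show "PB y" unfolding PB_def
  proof (intro allI impI)
    fix k l v assume h: "k < l \<and> l < length y \<and> v \<in> reps y k"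
    hence "v \<in> reps (y@[a]) k" using reps_snoc[of k y a] by simp
    moreover have "k < l" "l < length (y@[a])" using h by auto
    ultimately have "\<not>(v < (y@[a])!l \<and> (y@[a])!l \<le> (y@[a])!k)" using assms unfolding PB_def by blast
    thus "\<not>(v < y!l \<and> y!l \<le> y!k)" using h by (simp add: nth_append)
  qed
  show "\<forall>k<length y. reps y k \<noteq> {} \<longrightarrow> \<not>(mn y k < a \<and> a \<le> y!k)"
  proof (intro allI impI)
    fix k assume k: "k < length y" "reps y k \<noteq> {}"
    hence "mn y k \<in> reps (y@[a]) k" using reps_snoc[of k y a] mn_in by simp
    moreover have "k < length y" "length y < length (y@[a])" using k by auto
    ultimately have "\<not>(mn y k < (y@[a])!length y \<and> (y@[a])!length y \<le> (y@[a])!k)" using assms unfolding PB_def by blast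
    thus "\<not>(mn y k < a \<and> a \<le> y!k)" using k by (simp add: nth_append)
  qed
qed


lemma Hlow:
  assumes B: "\<forall>k<length x. reps x k \<noteq> {} \<longrightarrow> \<not>(mn x k < a \<and> a \<le> phiv x k)"
  shows "p < length x \<Longrightarrow> reps x p \<noteq> {} \<Longrightarrow> mn x p < a \<Longrightarrow> x!p < a"
proof (induction p rule: less_induct)
  case (less p)
  show ?case
  proof (rule ccontr)
    assume ge: "\<not> x!p < a"
    show False
    proof (cases "\<exists>j. Dc x p j")
      case False
      thus False using B less.prems ge phiv_nD by fastforce
    next
      case True
      then obtain j where "Dc x p j" by blast
      note KE = Dc_E[OF this]
      define K where "K = Kx x p"
      have K1: "K < p" "reps x K \<noteq> {}" "mn x K < x!p" "x!K = x!p" "phiv x p = mn x K"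
        using KE unfolding K_def by auto
      show False
      proof (cases "mn x K < a")
        case True
        hence "x!K < a" using less.IH[OF K1(1)] K1 less.prems by simp
        thus False using K1 ge by simp
      next
        case False
        thus False using B less.prems K1 by fastforce
      qed
    qed
  qed
qed

lemma phi_surj: "PB y \<Longrightarrow> \<exists>x. PA x \<and> phi x = y"
proof (induction y rule: rev_induct)
  case Nil
  have "PA []" unfolding PA_def by simp
  moreover have "phi [] = []" unfolding phi_def by simp
  ultimately show ?case by blast
next
  case (snoc a y)
  have PBy: "PB y" and Bc: "\<forall>k<length y. reps y k \<noteq> {} \<longrightarrow> \<not>(mn y k < a \<and> a \<le> y!k)"
    using PB_snoc[OF snoc.prems] by auto
  obtain x where A: "PA x" and xy: "phi x = y" using snoc.IH[OF PBy] by blast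
  define n where "n = length x"
  have ny: "length y = n" using xy n_def by auto
  have B: "\<forall>k<length x. reps x k \<noteq> {} \<longrightarrow> \<not>(mn x k < a \<and> a \<le> phiv x k)"
  proof (intro allI impI)
    fix k assume k: "k < length x" "reps x k \<noteq> {}"
    have "reps y k \<noteq> {}" "mn y k = mn x k" using reps_phi[of x k] k xy by auto
    moreover have "y!k = phiv x k" using xy k by auto
    ultimately show "\<not>(mn x k < a \<and> a \<le> phiv x k)" using Bc k ny n_def by auto
  qed
  note H = Hlow[OF B]
  define E where "E k \<longleftrightarrow> k < n \<and> reps x k \<noteq> {} \<and> mn x k = a \<and> a < x!k" for k
  show ?case
  proof (cases "\<exists>k. E k")
    case False
    have PA': "PA (x@[a])"
    proof (rule PA_snoc[OF A], intro allI impI notI)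
      fix k assume k: "k < length x" "reps x k \<noteq> {}" "mn x k \<le> a \<and> a < x!k"
      show False
      proof (cases "mn x k < a")
        case True thus False using H k by fastforce
      next
        case False
        hence "E k" unfolding E_def using k n_def by auto
        thus False using \<open>\<not>(\<exists>k. E k)\<close> by blast
      qed
    qed
    have nD: "\<not>(\<exists>k. Dc (x@[a]) n k)"
    proof
      assume "\<exists>k. Dc (x@[a]) n k"
      then obtain k where d: "Dc (x@[a]) n k" by blast
      hence k: "k < n" unfolding Dc_def by simp
      have "reps x k \<noteq> {}" "mn x k < a" "x!k = a"
        using d reps_snoc[of k x a] mn_snoc[of k x a] k n_def unfolding Dc_def by (auto simp: nth_append)
      thus False using H k n_def by fastforce
    qed
    have "phi (x@[a]) = y@[a]" using phi_snoc[of x a] phiv_nD[OF nD] xy n_def by simp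
    thus ?thesis using PA' by blast
  next
    case True
    then obtain k0 where "E k0" by blast
    have bnd: "\<forall>k. E k \<longrightarrow> k \<le> n" unfolding E_def by simp
    define K0 where "K0 = (GREATEST k. E k)"
    have EK0: "E K0" and maxK0: "\<And>k. E k \<Longrightarrow> k \<le> K0"
      unfolding K0_def using GreatestI_nat[of E k0 n] \<open>E k0\<close> Greatest_le_nat[of E _ n] bnd by auto
    have K0: "K0 < n" "reps x K0 \<noteq> {}" "mn x K0 = a" "a < x!K0" using EK0 unfolding E_def by auto
    define b where "b = x!K0"
    have PA': "PA (x@[b])"
    proof (rule PA_snoc[OF A], intro allI impI notI)
      fix k assume k: "k < length x" "reps x k \<noteq> {}" "mn x k \<le> b \<and> b < x!k"
      show False
      proof (cases "mn x k < a")
        case True thus False using H k K0 b_def by fastforce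
      next
        case False
        consider "k < K0" | "k = K0" | "K0 < k" by linarith
        thus False
        proof cases
          case 1
          have "\<not>(mn x k \<le> x!K0 \<and> x!K0 < x!k)" using PA_mn[OF A 1 _ k(2)] K0 n_def by simp
          thus False using k b_def by simp
        next
          case 2 thus False using k b_def by simp
        next
          case 3
          have "mn x k \<le> mn x K0" using mn_mono[OF K0(2)] 3 by simp
          hence "E k" unfolding E_def using False K0 k n_def b_def by auto
          thus False using maxK0 3 by fastforce
        qed
      qed
    qed
    have dK0: "Dc (x@[b]) n K0"
      using K0 reps_snoc[of K0 x b] mn_snoc[of K0 x b] n_def b_def unfolding Dc_def by (auto simp: nth_append)
    note KE = Dc_E[OF dK0]
    define K where "K = Kx (x@[b]) n"
    have K1: "K < n" "reps x K \<noteq> {}" "mn x K < b" "x!K = b" "phiv (x@[b]) n = mn x K" "K0 \<le> K"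
      using KE reps_snoc[of K x b] mn_snoc[of K x b] n_def unfolding K_def by (auto simp: nth_append)
    have "mn x K = a"
    proof (cases "K = K0")
      case True thus ?thesis using K0 by simp
    next
      case False
      hence "K0 < K" using K1 by simp
      have le: "mn x K \<le> a" using mn_mono[OF K0(2), of K] K1 K0 by simp
      show ?thesis
      proof (cases "mn x K < a")
        case True
        hence "x!K < a" using H[of K] K1 n_def by blast
        thus ?thesis using K1 K0 b_def by simp
      next
        case False
        hence "E K" unfolding E_def using le K1 K0 b_def by auto
        thus ?thesis using maxK0 \<open>K0 < K\<close> by fastforce
      qed
    qed
    hence "phi (x@[b]) = y@[a]" using phi_snoc[of x b] K1 xy n_def by simp
    thus ?thesis using PA' by blast
  qed
qed


lemma asc_take_phi:
  assumes A: "PA x"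
  shows "asc (take i (phi x)) = asc (take i x)"
proof -
  have "{j. Suc j < length (take i (phi x)) \<and> take i (phi x) ! j < take i (phi x) ! Suc j} =
        {j. Suc j < length (take i x) \<and> take i x ! j < take i x ! Suc j}"
  proof (intro Collect_cong)
    fix j
    show "(Suc j < length (take i (phi x)) \<and> take i (phi x) ! j < take i (phi x) ! Suc j) =
          (Suc j < length (take i x) \<and> take i x ! j < take i x ! Suc j)"
    proof (cases "Suc j < length (take i x)")
      case True
      hence "Suc j < length x" "Suc j < i" by auto
      thus ?thesis using asc_pres[OF A, of j] True by simp
    qed auto
  qed
  thus ?thesis unfolding asc_def by simp
qed

lemma asc_phi: "PA x \<Longrightarrow> asc (phi x) = asc x"
  using asc_take_phi[of x "length x"] by simp

lemma asc_take_mono: "K \<le> i \<Longrightarrow> asc (take K xs) \<le> asc (take i xs)"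
  unfolding asc_def
proof (rule card_mono)
  show "finite {j. Suc j < length (take i xs) \<and> take i xs ! j < take i xs ! Suc j}"
    by (rule finite_subset[of _ "{..<length (take i xs)}"]) auto
  assume "K \<le> i"
  thus "{j. Suc j < length (take K xs) \<and> take K xs ! j < take K xs ! Suc j}
      \<subseteq> {j. Suc j < length (take i xs) \<and> take i xs ! j < take i xs ! Suc j}"
    by auto
qed

lemma phiv0: "phiv x 0 = x!0"
  by (rule phiv_nD) (simp add: Dc_def)

lemma ascent_seq_phi:
  assumes A: "PA x" and S: "ascent_seq x"
  shows "ascent_seq (phi x)"
  unfolding ascent_seq_def
proof (intro conjI allI impI)
  show "phi x \<noteq> []" using S unfolding ascent_seq_def by (simp add: phi_def)
  show "phi x ! 0 = 0" using S phiv0 unfolding ascent_seq_def by simp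
  fix i assume i: "0 < i \<and> i < length (phi x)"
  have "phi x ! i \<le> x!i" using phiv_le i by simp
  also have "\<dots> \<le> asc (take i x) + 1" using S i unfolding ascent_seq_def by simp
  finally show "phi x ! i \<le> asc (take i (phi x)) + 1" using asc_take_phi[OF A] by simp
qed

lemma ascent_seq_unphi:
  assumes A: "PA x" and S: "ascent_seq (phi x)"
  shows "ascent_seq x"
proof -
  have ne: "x \<noteq> []" using S unfolding ascent_seq_def by (auto simp: phi_def)
  have x0: "x!0 = 0" using S ne phiv0 unfolding ascent_seq_def by simp
  have main: "i < length x \<Longrightarrow> x!i \<le> asc (take i x) + 1" for i
  proof (induction i rule: less_induct)
    case (less i)
    show ?case
    proof (cases "i = 0")
      case True thus ?thesis using x0 by simp
    next
      case i0: False
      show ?thesis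
      proof (cases "\<exists>j. Dc x i j")
        case False
        have "x!i = phi x ! i" using less.prems phiv_nD[OF False] by simp
        also have "\<dots> \<le> asc (take i (phi x)) + 1" using S less.prems i0 unfolding ascent_seq_def by simp
        finally show ?thesis using asc_take_phi[OF A] by simp
      next
        case True
        then obtain j where "Dc x i j" by blast
        note KE = Dc_E[OF this]
        have "x!i = x!(Kx x i)" using KE by simp
        also have "\<dots> \<le> asc (take (Kx x i) x) + 1" using less.IH[of "Kx x i"] KE less.prems by simp
        also have "\<dots> \<le> asc (take i x) + 1" using asc_take_mono[of "Kx x i" i x] KE by simp
        finally show ?thesis .
      qed
    qed
  qed
  show ?thesis unfolding ascent_seq_def using ne x0 main by auto
qed

lemma PA_iff_Q: "PA xs \<longleftrightarrow> \<not>(\<exists>i j k l. i<j \<and> j<k \<and> k<l \<and> l < length xs \<and> xs!i = xs!j \<and> xs!i \<le> xs!l \<and> xs!l < xs!k)"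
proof
  assume PA: "PA xs"
  show "\<not>(\<exists>i j k l. i<j \<and> j<k \<and> k<l \<and> l < length xs \<and> xs!i = xs!j \<and> xs!i \<le> xs!l \<and> xs!l < xs!k)"
  proof
    assume "\<exists>i j k l. i<j \<and> j<k \<and> k<l \<and> l < length xs \<and> xs!i = xs!j \<and> xs!i \<le> xs!l \<and> xs!l < xs!k"
    then obtain i j k l where h: "i<j" "j<k" "k<l" "l < length xs" "xs!i = xs!j" and h2: "xs!i \<le> xs!l \<and> xs!l < xs!k" by blast
    have "xs!i \<in> reps xs k" unfolding reps_def mem_Collect_eq
      by (rule exI[of _ i]) (use h in auto)
    thus False using PA h h2 unfolding PA_def by blast
  qed
next
  assume nQ: "\<not>(\<exists>i j k l. i<j \<and> j<k \<and> k<l \<and> l < length xs \<and> xs!i = xs!j \<and> xs!i \<le> xs!l \<and> xs!l < xs!k)"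
  show "PA xs" unfolding PA_def
  proof (intro allI impI)
    fix k l v assume h: "k<l \<and> l<length xs \<and> v \<in> reps xs k"
    then obtain i j where g: "v = xs!i" "i<j" "j<k" "xs!i = xs!j" unfolding reps_def by blast
    show "\<not>(v \<le> xs!l \<and> xs!l < xs!k)"
    proof
      assume "v \<le> xs!l \<and> xs!l < xs!k"
      hence "xs!i \<le> xs!l \<and> xs!l < xs!k" using g by simp
      thus False using nQ h g by blast
    qed
  qed
qed

lemma PA_iff: "(\<forall>p\<in>{[0,0,1,0], [0,0,2,1]}. avoids xs p) \<longleftrightarrow> PA xs"
proof -
  have e: "\<And>i j k l. (xs!i = xs!j \<and> xs!i \<le> xs!l \<and> xs!l < xs!k) \<longleftrightarrow> ((xs!i = xs!j \<and> xs!i < xs!k \<and> xs!l = xs!i) \<or> (xs!i = xs!j \<and> xs!i < xs!l \<and> xs!l < xs!k))" by auto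
  have 1: "(\<forall>p\<in>{[0,0,1,0], [0,0,2,1]}. avoids xs p) \<longleftrightarrow> \<not>contains xs [0,0,1,0] \<and> \<not>contains xs [0,0,2,1]"
    unfolding avoids_def by blast
  show ?thesis unfolding 1 PA_iff_Q contains_0010 contains_0021
    by (simp only: e conj_disj_distribL ex_disj_distrib) simp
qed

lemma PB_iff_Q: "PB xs \<longleftrightarrow> \<not>(\<exists>i j k l. i<j \<and> j<k \<and> k<l \<and> l < length xs \<and> xs!i = xs!j \<and> xs!i < xs!l \<and> xs!l \<le> xs!k)"
proof
  assume PA: "PB xs"
  show "\<not>(\<exists>i j k l. i<j \<and> j<k \<and> k<l \<and> l < length xs \<and> xs!i = xs!j \<and> xs!i < xs!l \<and> xs!l \<le> xs!k)"
  proof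
    assume "\<exists>i j k l. i<j \<and> j<k \<and> k<l \<and> l < length xs \<and> xs!i = xs!j \<and> xs!i < xs!l \<and> xs!l \<le> xs!k"
    then obtain i j k l where h: "i<j" "j<k" "k<l" "l < length xs" "xs!i = xs!j" and h2: "xs!i < xs!l \<and> xs!l \<le> xs!k" by blast
    have "xs!i \<in> reps xs k" unfolding reps_def mem_Collect_eq
      by (rule exI[of _ i]) (use h in auto)
    thus False using PA h h2 unfolding PB_def by blast
  qed
next
  assume nQ: "\<not>(\<exists>i j k l. i<j \<and> j<k \<and> k<l \<and> l < length xs \<and> xs!i = xs!j \<and> xs!i < xs!l \<and> xs!l \<le> xs!k)"
  show "PB xs" unfolding PB_def
  proof (intro allI impI)
    fix k l v assume h: "k<l \<and> l<length xs \<and> v \<in> reps xs k"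
    then obtain i j where g: "v = xs!i" "i<j" "j<k" "xs!i = xs!j" unfolding reps_def by blast
    show "\<not>(v < xs!l \<and> xs!l \<le> xs!k)"
    proof
      assume "v < xs!l \<and> xs!l \<le> xs!k"
      hence "xs!i < xs!l \<and> xs!l \<le> xs!k" using g by simp
      thus False using nQ h g by blast
    qed
  qed
qed

lemma PB_iff: "(\<forall>p\<in>{[0,0,1,1], [0,0,2,1]}. avoids xs p) \<longleftrightarrow> PB xs"
proof -
  have e: "\<And>i j k l. (xs!i = xs!j \<and> xs!i < xs!l \<and> xs!l \<le> xs!k) \<longleftrightarrow> ((xs!i = xs!j \<and> xs!i < xs!k \<and> xs!l = xs!k) \<or> (xs!i = xs!j \<and> xs!i < xs!l \<and> xs!l < xs!k))" by auto
  have 1: "(\<forall>p\<in>{[0,0,1,1], [0,0,2,1]}. avoids xs p) \<longleftrightarrow> \<not>contains xs [0,0,1,1] \<and> \<not>contains xs [0,0,2,1]"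
    unfolding avoids_def by blast
  show ?thesis unfolding 1 PB_iff_Q contains_0011 contains_0021
    by (simp only: e conj_disj_distribL ex_disj_distrib) simp
qed


theorem proposition3:
  fixes n m :: nat
  assumes "1 \<le> n" and "m < n"
  shows "S n m {[0,0,1,0], [0,0,2,1]} = S n m {[0,0,1,1], [0,0,2,1]}"
proof -
  define SA where "SA = {xs. ascent_seq xs \<and> length xs = n \<and> asc xs = m \<and> (\<forall>p\<in>{[0,0,1,0], [0,0,2,1]}. avoids xs p)}"
  define SB where "SB = {xs. ascent_seq xs \<and> length xs = n \<and> asc xs = m \<and> (\<forall>p\<in>{[0,0,1,1], [0,0,2,1]}. avoids xs p)}"
  have A: "SA = {xs. ascent_seq xs \<and> length xs = n \<and> asc xs = m \<and> PA xs}"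
    unfolding SA_def using PA_iff by blast
  have B: "SB = {xs. ascent_seq xs \<and> length xs = n \<and> asc xs = m \<and> PB xs}"
    unfolding SB_def using PB_iff by blast
  have inj: "inj_on phi SA"
    unfolding inj_on_def A using phi_inj by (metis (mono_tags, lifting) mem_Collect_eq)
  have img: "phi ` SA = SB"
  proof
    show "phi ` SA \<subseteq> SB"
    proof
      fix y assume "y \<in> phi ` SA"
      then obtain x where x: "x \<in> SA" "y = phi x" by blast
      have "ascent_seq x" "length x = n" "asc x = m" "PA x" using x A by auto
      thus "y \<in> SB" unfolding B using x ascent_seq_phi asc_phi PB_phi by auto
    qed
    show "SB \<subseteq> phi ` SA"
    proof
      fix y assume "y \<in> SB"
      hence y: "ascent_seq y" "length y = n" "asc y = m" "PB y" using B by auto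
      obtain x where x: "PA x" "phi x = y" using phi_surj[OF y(4)] by blast
      have "ascent_seq x" using ascent_seq_unphi[OF x(1)] x y by simp
      moreover have "length x = n" using x y by (metis length_phi)
      moreover have "asc x = m" using asc_phi[OF x(1)] x y by simp
      ultimately have "x \<in> SA" unfolding A using x by blast
      thus "y \<in> phi ` SA" using x by blast
    qed
  qed
  have "S n m {[0,0,1,0], [0,0,2,1]} = card SA" by (simp only: S_def SA_def)
  also have "\<dots> = card (phi ` SA)" using card_image[OF inj] by simp
  also have "\<dots> = card SB" using img by simp
  also have "\<dots> = S n m {[0,0,1,1], [0,0,2,1]}" by (simp only: S_def SB_def)
  finally show ?thesis .
qed

end
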